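(* Let $m>0$, $\alpha>0$ and $\omega\ge 0$ with $\alpha>2\omega$, and consider the dynamical system \[ \frac{d\phi}{dt}=\gamma,\qquad \frac{d\gamma}{dt}=\frac{1}{m}\bigl(-\gamma+\omega-k\sin\phi\bigr),\qquad \frac{dk}{dt}=\alpha\cos\phi-k, \] with $(\phi,\gamma,k)\in[-\pi,\pi)\times\mathbb{R}\times\mathbb{R}$ ($\phi$ taken modulo $2\pi$). Write $\theta:=\tfrac12\arcsin\!\bigl(\tfrac{2\omega}{\alpha}\bigr)$ and consider its four equilibrium points $P_1=(\theta,0,\alpha\cos\theta)$, $P_2=(\tfrac{\pi}{2}-\theta,0,\alpha\sin\theta)$, $P_3=(-\pi+\theta,0,-\alpha\cos\theta)$, $P_4=(-\tfrac{\pi}{2}-\theta,0,-\alpha\sin\theta)$. Let $u:=\alpha+\sqrt{\alpha^2-4\omega^2}$ and $v:=\alpha-\sqrt{\alpha^2-4\omega^2}$. Then: \begin{enumerate} \item Let $\Gamma_1$ be the region in the $(u,v)$ plane with $0\le v\le u\le \frac{2(m^2-m+1)}{3m}$ that is bounded by the curves \[ v=u-\frac{\bigl(m+1+\sqrt{4(m+1)^2-6m(u+2)}\bigr)\bigl(\sqrt{4(m+1)^2-6m(u+2)}-2(m+1)\bigr)^2}{54m^2}, \] \[ v=u-\frac{\bigl(m+1-\sqrt{4(m+1)^2-6m(u+2)}\bigr)\bigl(\sqrt{4(m+1)^2-6m(u+2)}+2(m+1)\bigr)^2}{54m^2}. \] If $(u,v)\notin\Gamma_1$, then the Jacobian matrix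 of the system at the equilibria $P_1$ and $P_3$ has a negative real eigenvalue and two complex-conjugate eigenvalues with negative real part. Otherwise, the Jacobian matrix at $P_1$ and $P_3$ has three negative real eigenvalues. \item Let $\Gamma_2$ be the region in the $(u,v)$ plane with $0\le v\le u$ and $v\le \frac{2(m^2-m+1)}{3m}$ that is bounded by the curves \[ u=v-\frac{\bigl(m+1+\sqrt{4(m+1)^2-6m(v+2)}\bigr)\bigl(\sqrt{4(m+1)^2-6m(v+2)}-2(m+1)\bigr)^2}{54m^2}, \] \[ u=v-\frac{\bigl(m+1-\sqrt{4(m+1)^2-6m(v+2)}\bigr)\bigl(\sqrt{4(m+1)^2-6m(v+2)}+2(m+1)\bigr)^2}{54m^2}. \] If $(u,v)\notin\Gamma_2$, then the Jacobian matrix at the equilibria $P_2$ and $P_4$ has a positive real eigenvalue and two complex-conjugate eigenvalues with negative real part. Otherwise, the Jacobian matrix at $P_2$ and $P_4$ has one positive real eigenvalue and two negative real eigenvalues. \end{enumerate}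
   Context: This system describes the phase difference $\phi$, its derivative $\gamma$, and the (rescaled) adaptive coupling strength $k$ of two identical-mass Kuramoto oscillators with inertia and Hebbian learning; $m>0$ is the (rescaled) mass, $\alpha>0$ the learning enhancement factor, and $\omega\ge 0$ the intrinsic-frequency difference (the paper assumes $\omega\ge0$ throughout). The Jacobian matrix at an equilibrium $(\phi^*,\gamma^*,k^* )$ is the Jacobian of the vector field $(\gamma,\ \frac1m(-\gamma+\omega-k\sin\phi),\ \alpha\cos\phi-k)$ with respect to $(\phi,\gamma,k)$, evaluated at that point. *)

theory Defs
  imports "HOL-Analysis.Analysis"
begin

text \<open>The vector field (phi, gamma, k) -> (gamma, (-gamma + omega - k sin phi)/m, alpha cos phi - k),
  coordinates: p$1 = phi, p$2 = gamma, p$3 = k.\<close>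
definition kur_field :: "real \<Rightarrow> real \<Rightarrow> real \<Rightarrow> real^3 \<Rightarrow> real^3" where
  "kur_field m \<alpha> \<omega> p =
     vector [p$2, (- (p$2) + \<omega> - p$3 * sin (p$1)) / m, \<alpha> * cos (p$1) - p$3]"

definition kur_jacobian :: "real \<Rightarrow> real \<Rightarrow> real \<Rightarrow> real^3 \<Rightarrow> real^3^3" where
  "kur_jacobian m \<alpha> \<omega> p = jacobian (kur_field m \<alpha> \<omega>) (at p)"

definition char_poly_fun :: "real^'n^'n \<Rightarrow> complex \<Rightarrow> complex" where
  "char_poly_fun A x = det (\<chi> i j. (if i = j then x else 0) - complex_of_real (A$i$j))"

definition neg_real_and_stable_pair :: "real^3^3 \<Rightarrow> bool" where
  "neg_real_and_stable_pair A \<longleftrightarrow> (\<exists>(r::real) (z::complex). r < 0 \<and> Im z \<noteq> 0 \<and> Re z < 0 \<and>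
     (\<forall>x. char_poly_fun A x = (x - of_real r) * (x - z) * (x - cnj z)))"

definition pos_real_and_stable_pair :: "real^3^3 \<Rightarrow> bool" where
  "pos_real_and_stable_pair A \<longleftrightarrow> (\<exists>(r::real) (z::complex). r > 0 \<and> Im z \<noteq> 0 \<and> Re z < 0 \<and>
     (\<forall>x. char_poly_fun A x = (x - of_real r) * (x - z) * (x - cnj z)))"

definition three_neg_real :: "real^3^3 \<Rightarrow> bool" where
  "three_neg_real A \<longleftrightarrow> (\<exists>(a::real) (b::real) (c::real). a < 0 \<and> b < 0 \<and> c < 0 \<and>
     (\<forall>x. char_poly_fun A x = (x - of_real a) * (x - of_real b) * (x - of_real c)))"

definition one_pos_two_neg_real :: "real^3^3 \<Rightarrow> bool" where
  "one_pos_two_neg_real A \<longleftrightarrow> (\<exists>(a::real) (b::real) (c::real). a > 0 \<and> b < 0 \<and> c < 0 \<and>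
     (\<forall>x. char_poly_fun A x = (x - of_real a) * (x - of_real b) * (x - of_real c)))"

definition kur_theta :: "real \<Rightarrow> real \<Rightarrow> real" where
  "kur_theta \<alpha> \<omega> = arcsin (2 * \<omega> / \<alpha>) / 2"

definition kur_u :: "real \<Rightarrow> real \<Rightarrow> real" where
  "kur_u \<alpha> \<omega> = \<alpha> + sqrt (\<alpha>\<^sup>2 - 4 * \<omega>\<^sup>2)"

definition kur_v :: "real \<Rightarrow> real \<Rightarrow> real" where
  "kur_v \<alpha> \<omega> = \<alpha> - sqrt (\<alpha>\<^sup>2 - 4 * \<omega>\<^sup>2)"

definition P1 :: "real \<Rightarrow> real \<Rightarrow> real^3" where
  "P1 \<alpha> \<omega> = vector [kur_theta \<alpha> \<omega>, 0, \<alpha> * cos (kur_theta \<alpha> \<omega>)]"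

definition P2 :: "real \<Rightarrow> real \<Rightarrow> real^3" where
  "P2 \<alpha> \<omega> = vector [pi / 2 - kur_theta \<alpha> \<omega>, 0, \<alpha> * sin (kur_theta \<alpha> \<omega>)]"

definition P3 :: "real \<Rightarrow> real \<Rightarrow> real^3" where
  "P3 \<alpha> \<omega> = vector [- pi + kur_theta \<alpha> \<omega>, 0, - \<alpha> * cos (kur_theta \<alpha> \<omega>)]"

definition P4 :: "real \<Rightarrow> real \<Rightarrow> real^3" where
  "P4 \<alpha> \<omega> = vector [- pi / 2 - kur_theta \<alpha> \<omega>, 0, - \<alpha> * sin (kur_theta \<alpha> \<omega>)]"

definition kur_S :: "real \<Rightarrow> real \<Rightarrow> real" where
  "kur_S m w = sqrt (4 * (m + 1)\<^sup>2 - 6 * m * (w + 2))"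

definition Dplus :: "real \<Rightarrow> real \<Rightarrow> real" where
  "Dplus m w = (m + 1 + kur_S m w) * (kur_S m w - 2 * (m + 1))\<^sup>2 / (54 * m\<^sup>2)"

definition Dminus :: "real \<Rightarrow> real \<Rightarrow> real" where
  "Dminus m w = (m + 1 - kur_S m w) * (kur_S m w + 2 * (m + 1))\<^sup>2 / (54 * m\<^sup>2)"

definition kur_bound :: "real \<Rightarrow> real" where
  "kur_bound m = 2 * (m\<^sup>2 - m + 1) / (3 * m)"

definition Gamma1 :: "real \<Rightarrow> (real \<times> real) set" where
  "Gamma1 m = {(u, v). 0 \<le> v \<and> v \<le> u \<and> u \<le> kur_bound m \<and>
      min (u - Dplus m u) (u - Dminus m u) \<le> v \<and> v \<le> max (u - Dplus m u) (u - Dminus m u)}"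

definition Gamma2 :: "real \<Rightarrow> (real \<times> real) set" where
  "Gamma2 m = {(u, v). 0 \<le> v \<and> v \<le> u \<and> v \<le> kur_bound m \<and>
      min (v - Dplus m v) (v - Dminus m v) \<le> u \<and> u \<le> max (v - Dplus m v) (v - Dminus m v)}"

end

theory Submission
  imports Defs
begin

lemma exhaust3: "(i::3) = 1 \<or> i = 2 \<or> i = 3"
  using exhaust_3 by blast

lemma hd_vec_nth[derivative_intros]: "((\<lambda>x. x$i) has_derivative (\<lambda>h. h$i)) F"
  by (rule bounded_linear_imp_has_derivative[OF bounded_linear_vec_nth])

lemma kur_deriv:
  "(kur_field m \<alpha> \<omega> has_derivative (\<lambda>h. vector [h$2, (-(h$2) - (h$3 * sin(p$1) + p$3 * (cos(p$1) * h$1)))/m, -(\<alpha> * (sin(p$1) * h$1)) - h$3])) (at p)"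
proof -
  have "\<forall>i::3. ((\<lambda>x. kur_field m \<alpha> \<omega> x $ i) has_derivative (\<lambda>h. (vector [h$2, (-(h$2) - (h$3 * sin(p$1) + p$3 * (cos(p$1) * h$1)))/m, -(\<alpha> * (sin(p$1) * h$1)) - h$3] :: real^3) $ i)) (at p)"
  proof
    fix i :: 3
    from exhaust3 consider "i = 1" | "i = 2" | "i = 3" by blast
    then show "((\<lambda>x. kur_field m \<alpha> \<omega> x $ i) has_derivative (\<lambda>h. (vector [h$2, (-(h$2) - (h$3 * sin(p$1) + p$3 * (cos(p$1) * h$1)))/m, -(\<alpha> * (sin(p$1) * h$1)) - h$3] :: real^3) $ i)) (at p)"
    proof cases
      case 1
      then show ?thesis unfolding kur_field_def
        by (simp add: bounded_linear_imp_has_derivative[OF bounded_linear_vec_nth])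
    next
      case 2
      have "((\<lambda>x. (1/m) * (-(x$2) + \<omega> - x$3 * sin(x$1))) has_derivative (\<lambda>h. (1/m) * (-(h$2) - (h$3 * sin(p$1) + p$3*(cos(p$1)*h$1))))) (at p)"
        by (rule has_derivative_mult_right, auto intro!: derivative_eq_intros)
      then show ?thesis unfolding kur_field_def using 2
        by simp
    next
      case 3
      then show ?thesis unfolding kur_field_def
        by (simp, auto intro!: derivative_eq_intros simp: algebra_simps diff_divide_distrib)
    qed
  qed
  then show ?thesis
    apply (subst has_derivative_componentwise_within)
    apply (simp add: Basis_vec_def inner_axis)
    done
qed

lemma char_kur:
  assumes "m \<noteq> 0"
  shows "char_poly_fun (kur_jacobian m \<alpha> \<omega> p) x = x^3 + of_real ((m+1)/m) * x^2 + of_real ((1 + p$3*cos(p$1))/m) * x + of_real ((p$3*cos(p$1) - \<alpha>*(sin(p$1))^2)/m)"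
proof -
  have J: "kur_jacobian m \<alpha> \<omega> p = matrix (\<lambda>h. vector [h$2, (-(h$2) - (h$3 * sin(p$1) + p$3 * (cos(p$1) * h$1)))/m, -(\<alpha> * (sin(p$1) * h$1)) - h$3])"
    unfolding kur_jacobian_def jacobian_def by (simp only: frechet_derivative_at[OF kur_deriv, symmetric])
  define A where "A = kur_jacobian m \<alpha> \<omega> p"
  have e: "A$1$1 = 0" "A$1$2 = 1" "A$1$3 = 0"
     "A$2$1 = - (p$3 * cos(p$1))/m" "A$2$2 = -1/m" "A$2$3 = - sin(p$1)/m"
     "A$3$1 = - \<alpha> * sin(p$1)" "A$3$2 = 0" "A$3$3 = -1"
    unfolding A_def J matrix_def axis_def by simp_all
  have "char_poly_fun A x = x * (x + 1/m) * (x+1) + of_real (p$3 * cos(p$1) / m) * (x + 1) - of_real (\<alpha> * sin(p$1)^2 / m)"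
    unfolding char_poly_fun_def det_3 by (simp add: e of_real_def algebra_simps power2_eq_square)
  also have "\<dots> = x^3 + of_real ((m+1)/m) * x^2 + of_real ((1 + p$3*cos(p$1))/m) * x + of_real ((p$3*cos(p$1) - \<alpha>*(sin(p$1))^2)/m)"
    using assms by (simp add: of_real_def algebra_simps power2_eq_square power3_eq_cube add_divide_distrib diff_divide_distrib)
  finally show ?thesis unfolding A_def .
qed

lemma cubic_real_root: "\<exists>a::real. a^3 + b2*a^2 + b1*a + b0 = 0"
proof -
  define K where "K = 1 + \<bar>b2\<bar> + \<bar>b1\<bar> + \<bar>b0\<bar>"
  have K1: "K \<ge> 1" unfolding K_def by simp
  have K2: "K^2 \<ge> K" using K1 by (simp add: power2_eq_square)
  have a1: "\<bar>b2 * K^2\<bar> \<le> \<bar>b2\<bar> * K^2" by (simp add: abs_mult)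
  have a2: "\<bar>b1 * K\<bar> \<le> \<bar>b1\<bar> * K^2" using K1 K2 by (simp add: abs_mult mult_left_mono)
  have a3: "\<bar>b0\<bar> \<le> \<bar>b0\<bar> * K^2" using K1 K2 
    by (metis abs_ge_zero dual_order.trans mult.right_neutral mult_left_mono)
  have k3: "K^3 = K * K^2" by (simp add: power2_eq_square power3_eq_cube)
  have "K * K^2 = (\<bar>b2\<bar> + \<bar>b1\<bar> + \<bar>b0\<bar>) * K^2 + K^2" unfolding K_def by (simp add: algebra_simps)
  then have s: "K^3 = \<bar>b2\<bar> * K^2 + \<bar>b1\<bar> * K^2 + \<bar>b0\<bar> * K^2 + K^2" using k3 by (simp add: algebra_simps)
  have pos: "K^2 > 0" using K1 by simp
  have f1: "K^3 + b2*K^2 + b1*K + b0 \<ge> 0"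
    using s a1 a2 a3 pos by (smt (verit) abs_le_D2)
  have f2: "(-K)^3 + b2*(-K)^2 + b1*(-K) + b0 \<le> 0"
    using s a1 a2 a3 pos by (simp; smt (verit) abs_le_D2 abs_minus_cancel abs_mult)
  have "\<exists>x. -K \<le> x \<and> x \<le> K \<and> x^3 + b2*x^2 + b1*x + b0 = 0"
    by (rule IVT[of "\<lambda>x. x^3 + b2*x^2 + b1*x + b0"]) (use f1 f2 K1 in \<open>auto intro!: continuous_intros\<close>)
  then show ?thesis by blast
qed

lemma expand_real3:
  "(x - complex_of_real a) * (x - of_real b) * (x - of_real c) =
   x^3 + of_real (-(a+b+c)) * x^2 + of_real (a*b+b*c+c*a) * x + of_real (-(a*b*c))"
  by (simp add: algebra_simps power2_eq_square power3_eq_cube)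

lemma expand_cplx3:
  "(x - complex_of_real r) * (x - z) * (x - cnj z) =
   x^3 + of_real (-(r + 2*Re z)) * x^2 + of_real ((Re z)^2 + (Im z)^2 + 2*r*Re z) * x
     + of_real (-(r*((Re z)^2 + (Im z)^2)))"
proof -
  have "(x - z) * (x - cnj z) = x^2 - (z + cnj z) * x + z * cnj z"
    by (simp add: algebra_simps power2_eq_square)
  also have "\<dots> = x^2 - of_real (2 * Re z) * x + of_real ((Re z)^2 + (Im z)^2)"
    by (simp add: complex_add_cnj complex_mult_cnj)
  finally have q: "(x - z) * (x - cnj z) = x^2 - of_real (2 * Re z) * x + of_real ((Re z)^2 + (Im z)^2)" .
  have "(x - complex_of_real r) * (x - z) * (x - cnj z) = (x - of_real r) * (x^2 - of_real (2 * Re z) * x + of_real ((Re z)^2 + (Im z)^2))"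
    using q by (simp add: mult.assoc)
  also have "\<dots> = x^3 + of_real (-(r + 2*Re z)) * x^2 + of_real ((Re z)^2 + (Im z)^2 + 2*r*Re z) * x
     + of_real (-(r*((Re z)^2 + (Im z)^2)))"
    by (simp add: algebra_simps power2_eq_square power3_eq_cube)
  finally show ?thesis .
qed

definition cubG :: "real \<Rightarrow> real \<Rightarrow> real \<Rightarrow> real" where
  "cubG b2 b1 b0 = 4*(b2^2-3*b1)^3 - (2*b2^3 - 9*b2*b1 + 27*b0)^2"

lemma cubic_split:
  fixes b2 b1 b0 :: real
  obtains a p q where "b2 = p - a" "b1 = q - a*p" "b0 = - a * q"
    "cubG b2 b1 b0 = 27*(a^2+p*a+q)^2*(p^2-4*q)"
proof -
  obtain a where a: "a^3 + b2*a^2 + b1*a + b0 = 0" using cubic_real_root by blast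
  define p where "p = b2 + a"
  define q where "q = b1 + a*p"
  have e1: "b2 = p - a" unfolding p_def by simp
  have e2: "b1 = q - a*p" unfolding q_def by simp
  have e3: "b0 = - a * q" using a unfolding q_def p_def by (simp add: algebra_simps power2_eq_square power3_eq_cube)
  have "cubG b2 b1 b0 = 27*(a^2+p*a+q)^2*(p^2-4*q)"
    unfolding cubG_def e1 e2 e3 by algebra
  then show ?thesis using that e1 e2 e3 by blast
qed

lemma cubic_three_real:
  assumes "cubG b2 b1 b0 \<ge> 0"
  shows "\<exists>a b c. b2 = -(a+b+c) \<and> b1 = a*b+b*c+c*a \<and> b0 = -(a*b*c) \<and>
     (\<forall>x::complex. x^3 + of_real b2 * x^2 + of_real b1 * x + of_real b0 = (x - of_real a)*(x - of_real b)*(x - of_real c))"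
proof -
  obtain a p q where e: "b2 = p - a" "b1 = q - a*p" "b0 = - a * q"
    and G: "cubG b2 b1 b0 = 27*(a^2+p*a+q)^2*(p^2-4*q)" by (rule cubic_split)
  have d: "p^2 - 4*q \<ge> 0"
  proof (rule ccontr)
    assume "\<not> ?thesis"
    then have n: "p^2 - 4*q < 0" by simp
    have "4*(a^2+p*a+q) = (2*a+p)^2 + (4*q - p^2)" by (simp add: algebra_simps power2_eq_square)
    then have "a^2+p*a+q > 0" using n by (smt (verit) zero_le_power2)
    then have "27*(a^2+p*a+q)^2*(p^2-4*q) < 0" using n by (simp add: mult_pos_neg)
    then show False using G assms by simp
  qed
  define t where "t = sqrt (p^2 - 4*q)"
  have t2: "t^2 = p^2 - 4*q" unfolding t_def using d by simp
  define b where "b = (-p + t)/2"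
  define c where "c = (-p - t)/2"
  have bc1: "b + c = -p" unfolding b_def c_def by (simp add: field_simps)
  have bc2: "b * c = q" unfolding b_def c_def using t2 by (simp add: field_simps power2_eq_square)
  have r1: "b2 = -(a+b+c)" using e(1) bc1 by linarith
  have "a*b+b*c+c*a = a*(b+c) + b*c" by (simp add: algebra_simps)
  then have r2: "b1 = a*b+b*c+c*a" using e(2) bc1 bc2 by simp
  have "a*b*c = a*(b*c)" by (simp add: algebra_simps)
  then have r3: "b0 = -(a*b*c)" using e(3) bc2 by simp
  have "\<forall>x::complex. x^3 + of_real b2 * x^2 + of_real b1 * x + of_real b0 = (x - of_real a)*(x - of_real b)*(x - of_real c)"
    unfolding expand_real3 r1 r2 r3 by (rule allI, rule refl)
  then show ?thesis using r1 r2 r3 by blast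
qed

lemma cubic_complex_pair:
  assumes "cubG b2 b1 b0 < 0"
  shows "\<exists>r z. Im z \<noteq> 0 \<and> b2 = -(r + 2*Re z) \<and> b1 = (Re z)^2 + (Im z)^2 + 2*r*Re z \<and>
     b0 = -(r*((Re z)^2 + (Im z)^2)) \<and>
     (\<forall>x::complex. x^3 + of_real b2 * x^2 + of_real b1 * x + of_real b0 = (x - of_real r)*(x - z)*(x - cnj z))"
proof -
  obtain a p q where e: "b2 = p - a" "b1 = q - a*p" "b0 = - a * q"
    and G: "cubG b2 b1 b0 = 27*(a^2+p*a+q)^2*(p^2-4*q)" by (rule cubic_split)
  have d: "4*q - p^2 > 0"
  proof (rule ccontr)
    assume "\<not> ?thesis"
    then have "p^2 - 4*q \<ge> 0" by simp
    then have "27*(a^2+p*a+q)^2*(p^2-4*q) \<ge> 0" by simp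
    then show False using G assms by simp
  qed
  define t where "t = sqrt (4*q - p^2)"
  have t2: "t^2 = 4*q - p^2" unfolding t_def using d by simp
  have tp: "t > 0" unfolding t_def using d by simp
  define z where "z = Complex (-p/2) (t/2)"
  have z: "Re z = -p/2" "Im z = t/2" unfolding z_def by simp_all
  have "(Re z)^2 + (Im z)^2 = (-p/2)^2 + (t/2)^2" by (simp only: z)
  also have "\<dots> = (p^2 + t^2)/4" by (simp add: power_divide power2_eq_square)
  also have "\<dots> = q" using t2 by simp
  finally have n: "(Re z)^2 + (Im z)^2 = q" .
  have r1: "b2 = -(a + 2*Re z)" using e(1) z(1) by linarith
  have r2: "b1 = (Re z)^2 + (Im z)^2 + 2*a*Re z" unfolding n using e(2) z(1) by simp
  have r3: "b0 = -(a*((Re z)^2 + (Im z)^2))" unfolding n using e(3) by simp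
  have "\<forall>x::complex. x^3 + of_real b2 * x^2 + of_real b1 * x + of_real b0 = (x - of_real a)*(x - z)*(x - cnj z)"
    unfolding expand_cplx3 r1 r2 r3 by (rule allI, rule refl)
  moreover have "Im z \<noteq> 0" using tp z by simp
  ultimately show ?thesis using r1 r2 r3 by blast
qed

lemma gamma_equiv:
  assumes m: "m > 0"
  shows "cubG ((m+1)/m) ((1 + w/2)/m) (E/m) \<ge> 0 \<longleftrightarrow>
         (w \<le> kur_bound m \<and> Dminus m w / 2 \<le> E \<and> E \<le> Dplus m w / 2)"
proof -
  define M where "M = m + 1"
  define c1 where "c1 = 1 + w/2"
  define A where "A = M^2 - 3*m*c1"
  define B where "B = 2*M^3 - 9*m*M*c1 + 27*m^2*E"
  have h1: "((m+1)/m)^2 - 3*((1 + w/2)/m) = A / m^2"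
    unfolding A_def M_def c1_def using m by (simp add: field_simps power2_eq_square)
  have h2: "2*((m+1)/m)^3 - 9*((m+1)/m)*((1 + w/2)/m) + 27*(E/m) = B / m^3"
    unfolding B_def M_def c1_def using m by (simp add: field_simps power2_eq_square power3_eq_cube)
  have G: "cubG ((m+1)/m) ((1 + w/2)/m) (E/m) = (4*A^3 - B^2) / m^6"
    unfolding cubG_def h1 h2 using m by (simp add: power_divide field_simps flip: power_mult)
  have m6: "m^6 > 0" using m by simp
  have G0: "cubG ((m+1)/m) ((1 + w/2)/m) (E/m) \<ge> 0 \<longleftrightarrow> B^2 \<le> 4*A^3"
    unfolding G using m6 by (simp add: zero_le_divide_iff)
  have bnd: "w \<le> kur_bound m \<longleftrightarrow> A \<ge> 0"
  proof -
    have i: "w \<le> kur_bound m \<longleftrightarrow> w * (3*m) \<le> 2 * (m\<^sup>2 - m + 1)"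
      unfolding kur_bound_def using m by (simp add: pos_le_divide_eq)
    have e1: "w * (3*m) = 3*(m*w)" by simp
    have e2: "A = m^2 - m + 1 - 3*(m*w)/2"
      unfolding A_def M_def c1_def by (simp add: algebra_simps power2_eq_square)
    show ?thesis unfolding i e1 e2 by (simp add: field_simps)
  qed
  define S where "S = kur_S m w"
  have S4: "4 * (m + 1)\<^sup>2 - 6 * m * (w + 2) = 4*A"
    unfolding A_def M_def c1_def by (simp add: algebra_simps)
  have main: "B^2 \<le> 4*A^3 \<longleftrightarrow> Dminus m w / 2 \<le> E \<and> E \<le> Dplus m w / 2" if A0: "A \<ge> 0"
  proof -
    have S2: "S^2 = 4*A" unfolding S_def kur_S_def S4 using A0 by simp
    have Sn: "S \<ge> 0" unfolding S_def kur_S_def S4 using A0 by simp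
    have dp: "27*m^2*(Dplus m w / 2) = (M+S)*(S-2*M)^2/4"
      unfolding Dplus_def M_def S_def using m by (simp add: field_simps)
    have dm: "27*m^2*(Dminus m w / 2) = (M-S)*(S+2*M)^2/4"
      unfolding Dminus_def M_def S_def using m by (simp add: field_simps)
    have p1: "4*B = 4*(27*m^2*E) - (M+S)*(S-2*M)^2 + S^3"
      using S2 unfolding B_def A_def by algebra
    have p2: "4*B = 4*(27*m^2*E) - (M-S)*(S+2*M)^2 - S^3"
      using S2 unfolding B_def A_def by algebra
    have idP: "B = 27*m^2*(E - Dplus m w / 2) + S^3/4"
      using p1 dp by (simp add: algebra_simps)
    have idM: "B = 27*m^2*(E - Dminus m w / 2) - S^3/4"
      using p2 dm by (simp add: algebra_simps)
    have A3: "4*A^3 = (S^3/4)^2"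
    proof -
      have "(S^3/4)^2 = (S^2)^3/16" by (simp add: power_divide flip: power_mult)
      then show ?thesis using S2 by (simp add: power_mult_distrib)
    qed
    have S3: "S^3/4 \<ge> 0" using Sn by simp
    have "B^2 \<le> 4*A^3 \<longleftrightarrow> \<bar>B\<bar> \<le> S^3/4"
      unfolding A3 using S3 by (simp add: abs_le_square_iff power2_le_iff_abs_le)
    also have "\<dots> \<longleftrightarrow> B \<le> S^3/4 \<and> - (S^3/4) \<le> B" by auto
    also have "B \<le> S^3/4 \<longleftrightarrow> 27*m^2*(E - Dplus m w / 2) \<le> 0" using idP by auto
    also have "\<dots> \<longleftrightarrow> E \<le> Dplus m w / 2" using m by (simp add: mult_le_0_iff)
    also have "- (S^3/4) \<le> B \<longleftrightarrow> 0 \<le> 27*m^2*(E - Dminus m w / 2)" using idM by auto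
    also have "\<dots> \<longleftrightarrow> Dminus m w / 2 \<le> E" using m by (simp add: zero_le_mult_iff)
    finally show ?thesis by auto
  qed
  show ?thesis
  proof
    assume "cubG ((m+1)/m) ((1 + w/2)/m) (E/m) \<ge> 0"
    then have b: "B^2 \<le> 4*A^3" using G0 by simp
    have "A \<ge> 0"
    proof (rule ccontr)
      assume "\<not> A \<ge> 0"
      then have "A^3 < 0" by (simp add: power_less_zero_eq)
      then show False using b by (smt (verit) zero_le_power2)
    qed
    then show "w \<le> kur_bound m \<and> Dminus m w / 2 \<le> E \<and> E \<le> Dplus m w / 2"
      using main b bnd by blast
  next
    assume "w \<le> kur_bound m \<and> Dminus m w / 2 \<le> E \<and> E \<le> Dplus m w / 2"
    then show "cubG ((m+1)/m) ((1 + w/2)/m) (E/m) \<ge> 0"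
      using main bnd G0 by blast
  qed
qed

lemma D_order:
  assumes m: "m > 0" and w: "w \<le> kur_bound m"
  shows "Dminus m w \<le> Dplus m w"
proof -
  define S where "S = kur_S m w"
  define M where "M = m + 1"
  have "3*(m*w) \<le> 2*(m^2 - m + 1)"
    using w m unfolding kur_bound_def by (simp add: pos_le_divide_eq algebra_simps)
  then have "4 * (m + 1)\<^sup>2 - 6 * m * (w + 2) \<ge> 0" by (simp add: algebra_simps power2_eq_square)
  then have Sn: "S \<ge> 0" unfolding S_def kur_S_def by simp
  have dp: "Dplus m w * (54*m^2) = (M+S)*(S-2*M)^2"
    unfolding Dplus_def M_def S_def using m by (simp add: field_simps)
  have dm: "Dminus m w * (54*m^2) = (M-S)*(S+2*M)^2"
    unfolding Dminus_def M_def S_def using m by (simp add: field_simps)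
  have idt: "(M+S)*(S-2*M)^2 - (M-S)*(S+2*M)^2 = 2*S^3"
    by (simp add: algebra_simps power2_eq_square power3_eq_cube)
  have "Dplus m w * (54*m^2) - Dminus m w * (54*m^2) = 2*S^3" using dp dm idt by linarith
  then have "(Dplus m w - Dminus m w) * (54*m^2) = 2*S^3" by (simp add: left_diff_distrib)
  moreover have "S^3 \<ge> 0" using Sn by simp
  ultimately have "(Dplus m w - Dminus m w) * (54*m^2) \<ge> 0" by linarith
  then show ?thesis using m by (simp add: zero_le_mult_iff)
qed

lemma root_neg:
  fixes r b2 b1 b0 :: real
  assumes "r^3 + b2*r^2 + b1*r + b0 = 0" "b2 \<ge> 0" "b1 \<ge> 0" "b0 > 0"
  shows "r < 0"
proof (rule ccontr)
  assume "\<not> r < 0"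
  then have r: "r \<ge> 0" by simp
  have "r^3 \<ge> 0" "b2*r^2 \<ge> 0" "b1*r \<ge> 0" using r assms by simp_all
  then show False using assms by linarith
qed

lemma gamma1_iff:
  assumes m: "m > 0" and v: "0 \<le> v" "v \<le> u"
  shows "(u, v) \<in> Gamma1 m \<longleftrightarrow> (u \<le> kur_bound m \<and> Dminus m u / 2 \<le> (u - v)/2 \<and> (u - v)/2 \<le> Dplus m u / 2)"
proof
  assume h: "(u, v) \<in> Gamma1 m"
  then have b: "u \<le> kur_bound m" unfolding Gamma1_def by simp
  have o: "Dminus m u \<le> Dplus m u" by (rule D_order[OF m b])
  then have "min (u - Dplus m u) (u - Dminus m u) = u - Dplus m u"
    "max (u - Dplus m u) (u - Dminus m u) = u - Dminus m u" by simp_all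
  then show "u \<le> kur_bound m \<and> Dminus m u / 2 \<le> (u - v)/2 \<and> (u - v)/2 \<le> Dplus m u / 2"
    using h b unfolding Gamma1_def by auto
next
  assume h: "u \<le> kur_bound m \<and> Dminus m u / 2 \<le> (u - v)/2 \<and> (u - v)/2 \<le> Dplus m u / 2"
  then have o: "Dminus m u \<le> Dplus m u" using D_order[OF m] by blast
  then have "min (u - Dplus m u) (u - Dminus m u) = u - Dplus m u"
    "max (u - Dplus m u) (u - Dminus m u) = u - Dminus m u" by simp_all
  then show "(u, v) \<in> Gamma1 m" using h v unfolding Gamma1_def by auto
qed

lemma gamma2_iff:
  assumes m: "m > 0" and v: "0 \<le> v" "v \<le> u"
  shows "(u, v) \<in> Gamma2 m \<longleftrightarrow> (v \<le> kur_bound m \<and> Dminus m v / 2 \<le> (v - u)/2 \<and> (v - u)/2 \<le> Dplus m v / 2)"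
proof
  assume h: "(u, v) \<in> Gamma2 m"
  then have b: "v \<le> kur_bound m" unfolding Gamma2_def by simp
  have o: "Dminus m v \<le> Dplus m v" by (rule D_order[OF m b])
  then have "min (v - Dplus m v) (v - Dminus m v) = v - Dplus m v"
    "max (v - Dplus m v) (v - Dminus m v) = v - Dminus m v" by simp_all
  then show "v \<le> kur_bound m \<and> Dminus m v / 2 \<le> (v - u)/2 \<and> (v - u)/2 \<le> Dplus m v / 2"
    using h b unfolding Gamma2_def by auto
next
  assume h: "v \<le> kur_bound m \<and> Dminus m v / 2 \<le> (v - u)/2 \<and> (v - u)/2 \<le> Dplus m v / 2"
  then have o: "Dminus m v \<le> Dplus m v" using D_order[OF m] by blast
  then have "min (v - Dplus m v) (v - Dminus m v) = v - Dplus m v"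
    "max (v - Dplus m v) (v - Dminus m v) = v - Dminus m v" by simp_all
  then show "(u, v) \<in> Gamma2 m" using h v unfolding Gamma2_def by auto
qed

lemma result13:
  fixes A :: "real^3^3"
  assumes m: "m > 0" and v: "0 \<le> v" "v < u"
    and ch: "\<And>x. char_poly_fun A x = x^3 + of_real ((m+1)/m) * x^2 + of_real ((1 + u/2)/m) * x + of_real (((u-v)/2)/m)"
  shows "((u, v) \<notin> Gamma1 m \<longrightarrow> neg_real_and_stable_pair A) \<and> ((u, v) \<in> Gamma1 m \<longrightarrow> three_neg_real A)"
proof -
  define b2 where "b2 = (m+1)/m"
  define b1 where "b1 = (1 + u/2)/m"
  define b0 where "b0 = ((u-v)/2)/m"
  have ch': "\<And>x. char_poly_fun A x = x^3 + of_real b2 * x^2 + of_real b1 * x + of_real b0"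
    unfolding b2_def b1_def b0_def by (rule ch)
  have p2: "b2 > 0" unfolding b2_def using m by simp
  have p1: "b1 > 0" unfolding b1_def using m v by simp
  have p0: "b0 > 0" unfolding b0_def using m v by simp
  have hur: "b2*b1 - b0 > 0"
  proof -
    have "b2*b1 - b0 = ((m+1)*(1+u/2) - m*((u-v)/2)) / m^2"
      unfolding b2_def b1_def b0_def using m by (simp add: field_simps power2_eq_square)
    also have "(m+1)*(1+u/2) - m*((u-v)/2) = m + 1 + u/2 + m * v/2" by (simp add: field_simps)
    finally have e: "b2*b1 - b0 = (m + 1 + u/2 + m * v/2) / m^2" .
    have "m * v \<ge> 0" using m v by simp
    then have "m + 1 + u/2 + m * v/2 > 0" using m v by linarith
    then show ?thesis unfolding e using m by simp
  qed
  have G: "(u, v) \<in> Gamma1 m \<longleftrightarrow> cubG b2 b1 b0 \<ge> 0"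
    unfolding gamma1_iff[OF m v(1) less_imp_le[OF v(2)]] b2_def b1_def b0_def
    using gamma_equiv[OF m, of u "(u-v)/2"] by simp
  show ?thesis
  proof (intro conjI impI)
    assume "(u, v) \<notin> Gamma1 m"
    then have "cubG b2 b1 b0 < 0" using G by simp
    from cubic_complex_pair[OF this] obtain r z where
      rz: "Im z \<noteq> 0" "b2 = -(r + 2*Re z)" "b1 = (Re z)^2 + (Im z)^2 + 2*r*Re z"
        "b0 = -(r*((Re z)^2 + (Im z)^2))"
        "\<forall>x::complex. x^3 + of_real b2 * x^2 + of_real b1 * x + of_real b0 = (x - of_real r)*(x - z)*(x - cnj z)"
      by blast
    have "r^3 + b2*r^2 + b1*r + b0 = 0" unfolding rz(2,3,4) by algebra
    then have rn: "r < 0" using root_neg p2 p1 p0 by (meson less_imp_le)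
    have "b2*b1 - b0 = -2 * Re z * ((r + Re z)^2 + (Im z)^2)" unfolding rz(2,3,4) by algebra
    moreover have "(r + Re z)^2 + (Im z)^2 > 0" using rz(1) by (simp add: add_nonneg_pos)
    ultimately have "Re z < 0" using hur
      by (smt (verit) mult_nonneg_nonneg mult_nonpos_nonneg)
    then show "neg_real_and_stable_pair A"
      unfolding neg_real_and_stable_pair_def using rn rz(1) rz(5) ch' by metis
  next
    assume "(u, v) \<in> Gamma1 m"
    then have "cubG b2 b1 b0 \<ge> 0" using G by simp
    from cubic_three_real[OF this] obtain a b c where
      abc: "b2 = -(a+b+c)" "b1 = a*b+b*c+c*a" "b0 = -(a*b*c)"
        "\<forall>x::complex. x^3 + of_real b2 * x^2 + of_real b1 * x + of_real b0 = (x - of_real a)*(x - of_real b)*(x - of_real c)"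
      by blast
    have "a^3 + b2*a^2 + b1*a + b0 = 0" unfolding abc(1,2,3) by algebra
    then have an: "a < 0" using root_neg p2 p1 p0 by (meson less_imp_le)
    have "b^3 + b2*b^2 + b1*b + b0 = 0" unfolding abc(1,2,3) by algebra
    then have bn: "b < 0" using root_neg p2 p1 p0 by (meson less_imp_le)
    have "c^3 + b2*c^2 + b1*c + b0 = 0" unfolding abc(1,2,3) by algebra
    then have cn: "c < 0" using root_neg p2 p1 p0 by (meson less_imp_le)
    show "three_neg_real A"
      unfolding three_neg_real_def using an bn cn abc(4) ch' by metis
  qed
qed

lemma result24:
  fixes A :: "real^3^3"
  assumes m: "m > 0" and v: "0 \<le> v" "v < u"
    and ch: "\<And>x. char_poly_fun A x = x^3 + of_real ((m+1)/m) * x^2 + of_real ((1 + v/2)/m) * x + of_real (((v-u)/2)/m)"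
  shows "((u, v) \<notin> Gamma2 m \<longrightarrow> pos_real_and_stable_pair A) \<and> ((u, v) \<in> Gamma2 m \<longrightarrow> one_pos_two_neg_real A)"
proof -
  define b2 where "b2 = (m+1)/m"
  define b1 where "b1 = (1 + v/2)/m"
  define b0 where "b0 = ((v-u)/2)/m"
  have ch': "\<And>x. char_poly_fun A x = x^3 + of_real b2 * x^2 + of_real b1 * x + of_real b0"
    unfolding b2_def b1_def b0_def by (rule ch)
  have p2: "b2 > 0" unfolding b2_def using m by simp
  have p0: "b0 < 0" unfolding b0_def using m v by (simp add: divide_neg_pos)
  have G: "(u, v) \<in> Gamma2 m \<longleftrightarrow> cubG b2 b1 b0 \<ge> 0"
    unfolding gamma2_iff[OF m v(1) less_imp_le[OF v(2)]] b2_def b1_def b0_def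
    using gamma_equiv[OF m, of v "(v-u)/2"] by simp
  show ?thesis
  proof (intro conjI impI)
    assume "(u, v) \<notin> Gamma2 m"
    then have "cubG b2 b1 b0 < 0" using G by simp
    from cubic_complex_pair[OF this] obtain r z where
      rz: "Im z \<noteq> 0" "b2 = -(r + 2*Re z)" "b1 = (Re z)^2 + (Im z)^2 + 2*r*Re z"
        "b0 = -(r*((Re z)^2 + (Im z)^2))"
        "\<forall>x::complex. x^3 + of_real b2 * x^2 + of_real b1 * x + of_real b0 = (x - of_real r)*(x - z)*(x - cnj z)"
      by blast
    have np: "(Re z)^2 + (Im z)^2 > 0" using rz(1) by (simp add: add_nonneg_pos)
    have "r * ((Re z)^2 + (Im z)^2) > 0" using rz(4) p0 by linarith
    then have rp: "r > 0" using np by (simp add: zero_less_mult_iff)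
    have "Re z < 0" using rz(2) rp p2 by linarith
    then show "pos_real_and_stable_pair A"
      unfolding pos_real_and_stable_pair_def using rp rz(1) rz(5) ch' by metis
  next
    assume "(u, v) \<in> Gamma2 m"
    then have "cubG b2 b1 b0 \<ge> 0" using G by simp
    from cubic_three_real[OF this] obtain a b c where
      abc: "b2 = -(a+b+c)" "b1 = a*b+b*c+c*a" "b0 = -(a*b*c)"
        "\<forall>x::complex. x^3 + of_real b2 * x^2 + of_real b1 * x + of_real b0 = (x - of_real a)*(x - of_real b)*(x - of_real c)"
      by blast
    have prod: "a*b*c > 0" using abc(3) p0 by linarith
    have sum: "a + b + c < 0" using abc(1) p2 by linarith
    have fa: "\<forall>x. char_poly_fun A x = (x - of_real a)*(x - of_real b)*(x - of_real c)" using abc(4) ch' by simp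
    have a0: "a \<noteq> 0" "b \<noteq> 0" "c \<noteq> 0" using prod by auto
    show "one_pos_two_neg_real A"
    proof (cases "a > 0")
      case True
      then have "b*c > 0" using prod by (metis mult.assoc zero_less_mult_pos)
      then have "b < 0 \<and> c < 0" using sum True by (smt (verit) zero_less_mult_iff)
      then show ?thesis unfolding one_pos_two_neg_real_def using True fa by blast
    next
      case False
      then have an: "a < 0" using a0 by simp
      then have "b*c < 0" using prod
        by (smt (verit) mult.assoc mult_neg_neg mult_pos_pos zero_less_mult_iff)
      then have "(b > 0 \<and> c < 0) \<or> (b < 0 \<and> c > 0)" by (simp add: mult_less_0_iff) 
      then show ?thesis
      proof
        assume bc: "b > 0 \<and> c < 0"
        have "\<forall>x. char_poly_fun A x = (x - of_real b)*(x - of_real a)*(x - of_real c)"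
          using fa by (simp add: mult_ac)
        then show ?thesis unfolding one_pos_two_neg_real_def using bc an by blast
      next
        assume bc: "b < 0 \<and> c > 0"
        have "\<forall>x. char_poly_fun A x = (x - of_real c)*(x - of_real a)*(x - of_real b)"
          using fa by (simp add: mult_ac)
        then show ?thesis unfolding one_pos_two_neg_real_def using bc an by blast
      qed
    qed
  qed
qed

lemma char_form:
  assumes "m \<noteq> 0" "p$3 * cos(p$1) = K1" "\<alpha> * (sin(p$1))^2 = K2"
  shows "char_poly_fun (kur_jacobian m \<alpha> \<omega> p) x = x^3 + of_real((m+1)/m)*x^2 + of_real((1+K1)/m)*x + of_real((K1 - K2)/m)"
  using char_kur[OF assms(1), of \<alpha> \<omega> p x] assms(2,3) by simp

theorem proposition1:
  fixes m \<alpha> \<omega> :: real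
  assumes "m > 0" and "\<alpha> > 0" and "\<omega> \<ge> 0" and "\<alpha> > 2 * \<omega>"
  shows "((kur_u \<alpha> \<omega>, kur_v \<alpha> \<omega>) \<notin> Gamma1 m \<longrightarrow>
            neg_real_and_stable_pair (kur_jacobian m \<alpha> \<omega> (P1 \<alpha> \<omega>)) \<and>
            neg_real_and_stable_pair (kur_jacobian m \<alpha> \<omega> (P3 \<alpha> \<omega>)))
       \<and> ((kur_u \<alpha> \<omega>, kur_v \<alpha> \<omega>) \<in> Gamma1 m \<longrightarrow>
            three_neg_real (kur_jacobian m \<alpha> \<omega> (P1 \<alpha> \<omega>)) \<and>
            three_neg_real (kur_jacobian m \<alpha> \<omega> (P3 \<alpha> \<omega>)))
       \<and> ((kur_u \<alpha> \<omega>, kur_v \<alpha> \<omega>) \<notin> Gamma2 m \<longrightarrow>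
            pos_real_and_stable_pair (kur_jacobian m \<alpha> \<omega> (P2 \<alpha> \<omega>)) \<and>
            pos_real_and_stable_pair (kur_jacobian m \<alpha> \<omega> (P4 \<alpha> \<omega>)))
       \<and> ((kur_u \<alpha> \<omega>, kur_v \<alpha> \<omega>) \<in> Gamma2 m \<longrightarrow>
            one_pos_two_neg_real (kur_jacobian m \<alpha> \<omega> (P2 \<alpha> \<omega>)) \<and>
            one_pos_two_neg_real (kur_jacobian m \<alpha> \<omega> (P4 \<alpha> \<omega>)))"
proof -
  note m = assms(1)
  have m0: "m \<noteq> 0" using m by simp
  define sq where "sq = sqrt (\<alpha>^2 - 4*\<omega>^2)"
  define u where "u = kur_u \<alpha> \<omega>"
  define v where "v = kur_v \<alpha> \<omega>"
  have uu: "u = \<alpha> + sq" unfolding u_def kur_u_def sq_def by simp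
  have vv: "v = \<alpha> - sq" unfolding v_def kur_v_def sq_def by simp
  have "(2*\<omega>)^2 < \<alpha>^2" using assms by (intro power_strict_mono) auto
  then have pos: "\<alpha>^2 - 4*\<omega>^2 > 0" by (simp add: power_mult_distrib)
  then have sqp: "sq > 0" unfolding sq_def by simp
  have "sq \<le> sqrt (\<alpha>^2)" unfolding sq_def using assms(3) by (intro real_sqrt_le_mono) simp
  then have sqa: "sq \<le> \<alpha>" using assms(2) by simp
  have v0: "0 \<le> v" using sqa vv by simp
  have vu: "v < u" using sqp uu vv by simp
  define y where "y = 2*\<omega>/\<alpha>"
  have y0: "0 \<le> y" unfolding y_def using assms by simp
  have y1: "y < 1" unfolding y_def using assms by simp
  define t where "t = kur_theta \<alpha> \<omega>"
  have t2: "2 * t = arcsin y" unfolding t_def kur_theta_def y_def by simp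
  have "\<alpha>^2 - 4*\<omega>^2 = \<alpha>^2 * (1 - y^2)" unfolding y_def using assms(2) by (simp add: field_simps power2_eq_square)
  then have "sq = sqrt (\<alpha>^2) * sqrt (1 - y^2)" unfolding sq_def by (simp add: real_sqrt_mult)
  then have sq2: "sq = \<alpha> * sqrt (1 - y^2)" using assms(2) by simp
  have c2: "cos (2*t) = sqrt (1 - y^2)" unfolding t2 using y0 y1 by (intro cos_arcsin) auto
  have hc: "\<alpha> * (cos t)^2 = u/2"
  proof -
    have e: "(cos t)^2 = (1 + cos (2*t))/2" using cos_double_cos[of t] by (simp add: field_simps)
    have "\<alpha> * (cos t)^2 = (\<alpha> + \<alpha> * cos (2*t))/2" unfolding e by (simp add: algebra_simps)
    then show ?thesis unfolding c2 uu sq2 by simp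
  qed
  have hs: "\<alpha> * (sin t)^2 = v/2"
  proof -
    have e: "(sin t)^2 = (1 - cos (2*t))/2" using cos_double_sin[of t] by (simp add: field_simps)
    have "\<alpha> * (sin t)^2 = (\<alpha> - \<alpha> * cos (2*t))/2" unfolding e by (simp add: algebra_simps)
    then show ?thesis unfolding c2 vv sq2 by simp
  qed
  have eP1: "P1 \<alpha> \<omega> $ 1 = t" "P1 \<alpha> \<omega> $ 3 = \<alpha> * cos t" unfolding P1_def t_def by simp_all
  have eP2: "P2 \<alpha> \<omega> $ 1 = pi/2 - t" "P2 \<alpha> \<omega> $ 3 = \<alpha> * sin t" unfolding P2_def t_def by simp_all
  have eP3: "P3 \<alpha> \<omega> $ 1 = -pi + t" "P3 \<alpha> \<omega> $ 3 = - \<alpha> * cos t" unfolding P3_def t_def by simp_all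
  have eP4: "P4 \<alpha> \<omega> $ 1 = -pi/2 - t" "P4 \<alpha> \<omega> $ 3 = - \<alpha> * sin t" unfolding P4_def t_def by simp_all
  have tr3: "cos (-pi + t) = - cos t" "sin (-pi + t) = - sin t" by (simp_all add: cos_add sin_add)
  have tr2: "cos (pi/2 - t) = sin t" "sin (pi/2 - t) = cos t" by (simp_all add: cos_diff sin_diff)
  have tr4: "cos (-pi/2 - t) = - sin t" "sin (-pi/2 - t) = - cos t" by (simp_all add: cos_diff sin_diff)
  have k1: "P1 \<alpha> \<omega> $ 3 * cos (P1 \<alpha> \<omega> $ 1) = u/2" "\<alpha> * (sin (P1 \<alpha> \<omega> $ 1))^2 = v/2"
    unfolding eP1 using hc hs by (simp_all add: power2_eq_square mult.assoc)
  have k3: "P3 \<alpha> \<omega> $ 3 * cos (P3 \<alpha> \<omega> $ 1) = u/2" "\<alpha> * (sin (P3 \<alpha> \<omega> $ 1))^2 = v/2"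
    unfolding eP3 tr3 using hc hs by (simp_all add: power2_eq_square mult.assoc)
  have k2: "P2 \<alpha> \<omega> $ 3 * cos (P2 \<alpha> \<omega> $ 1) = v/2" "\<alpha> * (sin (P2 \<alpha> \<omega> $ 1))^2 = u/2"
    unfolding eP2 tr2 using hc hs by (simp_all add: power2_eq_square mult.assoc)
  have k4: "P4 \<alpha> \<omega> $ 3 * cos (P4 \<alpha> \<omega> $ 1) = v/2" "\<alpha> * (sin (P4 \<alpha> \<omega> $ 1))^2 = u/2"
    unfolding eP4 tr4 using hc hs by (simp_all add: power2_eq_square mult.assoc)
  have d1: "(u/2 - v/2)/m = ((u-v)/2)/m" by (simp add: diff_divide_distrib)
  have d2: "(v/2 - u/2)/m = ((v-u)/2)/m" by (simp add: diff_divide_distrib)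
  have R1: "((u, v) \<notin> Gamma1 m \<longrightarrow> neg_real_and_stable_pair (kur_jacobian m \<alpha> \<omega> (P1 \<alpha> \<omega>))) \<and> ((u, v) \<in> Gamma1 m \<longrightarrow> three_neg_real (kur_jacobian m \<alpha> \<omega> (P1 \<alpha> \<omega>)))"
    by (rule result13[OF m v0 vu]) (use char_form[OF m0 k1] d1 in simp)
  have R3: "((u, v) \<notin> Gamma1 m \<longrightarrow> neg_real_and_stable_pair (kur_jacobian m \<alpha> \<omega> (P3 \<alpha> \<omega>))) \<and> ((u, v) \<in> Gamma1 m \<longrightarrow> three_neg_real (kur_jacobian m \<alpha> \<omega> (P3 \<alpha> \<omega>)))"
    by (rule result13[OF m v0 vu]) (use char_form[OF m0 k3] d1 in simp)
  have R2: "((u, v) \<notin> Gamma2 m \<longrightarrow> pos_real_and_stable_pair (kur_jacobian m \<alpha> \<omega> (P2 \<alpha> \<omega>))) \<and> ((u, v) \<in> Gamma2 m \<longrightarrow> one_pos_two_neg_real (kur_jacobian m \<alpha> \<omega> (P2 \<alpha> \<omega>)))"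
    by (rule result24[OF m v0 vu]) (use char_form[OF m0 k2] d2 in simp)
  have R4: "((u, v) \<notin> Gamma2 m \<longrightarrow> pos_real_and_stable_pair (kur_jacobian m \<alpha> \<omega> (P4 \<alpha> \<omega>))) \<and> ((u, v) \<in> Gamma2 m \<longrightarrow> one_pos_two_neg_real (kur_jacobian m \<alpha> \<omega> (P4 \<alpha> \<omega>)))"
    by (rule result24[OF m v0 vu]) (use char_form[OF m0 k4] d2 in simp)
  show ?thesis using R1 R2 R3 R4 unfolding u_def v_def by blast
qed

end
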